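(* The canonical model $\langle W,\mathcal{N},V\rangle$ for IML1 satisfies the $T$-condition: for all $w,v\in W$, if $v\in\bigcup\mathcal{N}_w$ then $\bigcap\mathcal{N}_v\subseteq\bigcup\mathcal{N}_w$.
   Context: Formulas are built from a denumerable set $PV$ of propositional variables and $\bot$ using $\land,\lor,\rightarrow$ and unary $\Delta$. The axioms of IML1 are all instances of the axiom schemes of intuitionistic propositional calculus, of K: $\Delta(\varphi\rightarrow\psi)\rightarrow(\Delta\varphi\rightarrow\Delta\psi)$ and of T: $\Delta\varphi\rightarrow\varphi$. An IML1-theory is a set of formulas containing all axioms and closed under modus ponens and under RN ($\varphi\in w\Rightarrow\Delta\varphi\in w$). A theory $w$ is prime if $\bot\notin w$ and $\varphi\lor\psi\in w$ iff ($\varphi\in w$ or $\psi\in w$). Canonical model: $W$ = set of all prime IML1-theories; for $w\in W$, $A_w=\{v\in W:w\subseteq v\}$, $B_w=\{v\in W:\forall\varphi\,(\Delta\varphi\in w\Rightarrow\varphi\in v)\}$, $\mathcal{N}_w=\{X\subseteq W:A_w\subseteq X\subseteq B_w\}$, so $\bigcap\mathcal{N}_w=A_w$ and $\bigcup\mathcal{N}_w=B_w$; $V(q)=\{w\in W:q\in w\}$. *)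

theory Defs
  imports Main
begin

datatype 'p fm =
    Var 'p
  | Bot
  | And "'p fm" "'p fm"
  | Or "'p fm" "'p fm"
  | Imp "'p fm" "'p fm"
  | Box "'p fm"   (* the unary operator Delta *)

inductive IML1_axiom :: "'p fm \<Rightarrow> bool" where
  A1: "IML1_axiom (Imp a (Imp b a))"
| A2: "IML1_axiom (Imp (Imp a (Imp b c)) (Imp (Imp a b) (Imp a c)))"
| A3: "IML1_axiom (Imp (And a b) a)"
| A4: "IML1_axiom (Imp (And a b) b)"
| A5: "IML1_axiom (Imp a (Imp b (And a b)))"
| A6: "IML1_axiom (Imp a (Or a b))"
| A7: "IML1_axiom (Imp b (Or a b))"
| A8: "IML1_axiom (Imp (Imp a c) (Imp (Imp b c) (Imp (Or a b) c)))"
| A9: "IML1_axiom (Imp Bot a)"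
| K: "IML1_axiom (Imp (Box (Imp a b)) (Imp (Box a) (Box b)))"
| T: "IML1_axiom (Imp (Box a) a)"

definition IML1_theory :: "'p fm set \<Rightarrow> bool" where
  "IML1_theory w \<longleftrightarrow>
     (\<forall>a. IML1_axiom a \<longrightarrow> a \<in> w) \<and>
     (\<forall>a b. a \<in> w \<longrightarrow> Imp a b \<in> w \<longrightarrow> b \<in> w) \<and>
     (\<forall>a. a \<in> w \<longrightarrow> Box a \<in> w)"

definition prime_theory :: "'p fm set \<Rightarrow> bool" where
  "prime_theory w \<longleftrightarrow> IML1_theory w \<and> Bot \<notin> w \<and>
     (\<forall>a b. Or a b \<in> w \<longleftrightarrow> (a \<in> w \<or> b \<in> w))"

definition canW :: "'p fm set set" where
  "canW = {w. prime_theory w}"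

definition canA :: "'p fm set \<Rightarrow> 'p fm set set" where
  "canA w = {v \<in> canW. w \<subseteq> v}"

definition canB :: "'p fm set \<Rightarrow> 'p fm set set" where
  "canB w = {v \<in> canW. \<forall>a. Box a \<in> w \<longrightarrow> a \<in> v}"

definition canN :: "'p fm set \<Rightarrow> 'p fm set set set" where
  "canN w = {X. X \<subseteq> canW \<and> canA w \<subseteq> X \<and> X \<subseteq> canB w}"

definition canV :: "'p \<Rightarrow> 'p fm set set" where
  "canV q = {w \<in> canW. Var q \<in> w}"

end

theory Submission
  imports Defs
begin

lemma T_in: "IML1_theory u \<Longrightarrow> Box a \<in> u \<Longrightarrow> a \<in> u"
  unfolding IML1_theory_def by (meson IML1_axiom.T)

lemma AB: "u \<in> canW \<Longrightarrow> canA u \<subseteq> canB u"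
  unfolding canA_def canB_def canW_def prime_theory_def using T_in by blast

theorem lemma6p2:
  fixes w v :: "nat fm set"
  assumes "w \<in> canW" and "v \<in> canW"
    and "v \<in> \<Union> (canN w)"
  shows "\<Inter> (canN v) \<subseteq> \<Union> (canN w)"
proof -
  have vB: "v \<in> canB w" using assms(3) unfolding canN_def by blast
  have Av: "canA v \<in> canN v" using AB[OF assms(2)] unfolding canN_def canA_def by blast
  have Bw: "canB w \<in> canN w" using AB[OF assms(1)] unfolding canN_def canB_def by blast
  have "canA v \<subseteq> canB w"
  proof
    fix u assume u: "u \<in> canA v"
    hence uW: "u \<in> canW" and vu: "v \<subseteq> u" unfolding canA_def by auto
    have "\<forall>a. Box a \<in> w \<longrightarrow> a \<in> u"
    proof (intro allI impI)
      fix a assume "Box a \<in> w"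
      hence "Box (Box a) \<in> w" using assms(1) unfolding canW_def prime_theory_def IML1_theory_def by blast
      hence "Box a \<in> u" using vB vu unfolding canB_def by blast
      thus "a \<in> u" using uW T_in unfolding canW_def prime_theory_def by blast
    qed
    thus "u \<in> canB w" using uW unfolding canB_def by blast
  qed
  thus ?thesis using Av Bw by blast
qed

end
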